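(* Let $G$ be a graph on $V$ and $W\subseteq V$ reducible in $G$. Then for every combinatorial reduction strategy applicable to $G$ whose domain is $W$, the number of applications of the negative rule $\mathrm{gnr}$ in the strategy equals the nullity of $W$ in $G$, namely $|W|-\operatorname{rank}_{\mathbf F_2}(A_{W,W})$. In particular, all such strategies use the same number of negative rules, and every successful strategy (domain $V$) uses exactly $|V|-\operatorname{rank}_{\mathbf F_2}(A)$ negative rules.
   Context: A graph means a finite simple graph in which loops are allowed, with adjacency matrix $A$ over $\mathbf F_2$ ($A_{vv}=1$ iff $v$ has a loop); $A_{W,W}$ is the principal submatrix on $W$. Let $\mathcal V$ be the $\mathbf F_2$-vector space with basis $V$, $\mathcal E(x,y)=x^TAy$, $\langle W\rangle$ the span of $W$, $\langle W\rangle^{\perp\mathcal E}=\{x:\mathcal E(x,w)=0\ \forall w\in\langle W\rangle\}$; $W$ is reducible if $\langle W\rangle+\langle W\rangle^{\perp\mathcal E}=\mathcal V$. Combinatorial reduction rules (domain ordered first, $R$ the principal submatrix on the remaining vertices): $\mathrm{gpr}_v$ applies iff $v$ has a loop, $\begin{pmatrix}1&Q\\Q^T&R\end{pmatrix}\mapsto R-Q^TQ$; $\mathrm{gdr}_{v_1,v_2}$ applies iff $v_1,v_2$ are loopless and adjacent, $\begin{pmatrix}J&Q\\Q^T&R\end{pmatrix}\mapsto R-Q^TJQ$, $J=\begin{pmatrix}0&1\\1&0\end{pmatrix}$; $\mathrm{gnr}_v$ (negative rule) applies iff $v$ is loopless with no neighbors, $\begin{pmatrix}0&\mathbf 0\\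 \mathbf 0^T&R\end{pmatrix}\mapsto R$. A combinatorial reduction strategy is a sequence $(\gamma_1,\dots,\gamma_k)$ of such rules; it is applicable to $G$ if each $\gamma_i$ applies to $\gamma_{i-1}\circ\cdots\circ\gamma_1(G)$; its domain is the set of all vertices removed; it is successful if applicable with domain $V$. *)

theory Defs
  imports Main
begin

text \<open>A graph (loops allowed) on the finite vertex set V is given by a symmetric
  adjacency relation A; A u v is the F2 entry of the adjacency matrix (True = 1),
  A v v means v has a loop. Values of A outside V x V are irrelevant.\<close>

definition is_graph :: "'a set \<Rightarrow> ('a \<Rightarrow> 'a \<Rightarrow> bool) \<Rightarrow> bool" where
  "is_graph V A \<longleftrightarrow> finite V \<and> (\<forall>u v. A u v = A v u)"

text \<open>F2-vectors of the space with basis V are identified with subsets of V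
  (addition = symmetric difference).\<close>

definition bilin :: "('a \<Rightarrow> 'a \<Rightarrow> bool) \<Rightarrow> 'a set \<Rightarrow> 'a set \<Rightarrow> bool" where
  "bilin A x y \<longleftrightarrow> odd (card {(u, v). u \<in> x \<and> v \<in> y \<and> A u v})"

definition span_set :: "'a set \<Rightarrow> 'a set set" where
  "span_set W = Pow W"

definition perpE :: "'a set \<Rightarrow> ('a \<Rightarrow> 'a \<Rightarrow> bool) \<Rightarrow> 'a set \<Rightarrow> 'a set set" where
  "perpE V A W = {x. x \<subseteq> V \<and> (\<forall>w\<in>span_set W. \<not> bilin A x w)}"

definition reducible :: "'a set \<Rightarrow> ('a \<Rightarrow> 'a \<Rightarrow> bool) \<Rightarrow> 'a set \<Rightarrow> bool" where
  "reducible V A W \<longleftrightarrow>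
     (\<forall>z. z \<subseteq> V \<longrightarrow> (\<exists>x\<in>span_set W. \<exists>y\<in>perpE V A W. z = (x - y) \<union> (y - x)))"

text \<open>Over F2 a nontrivial linear combination of rows
  indexed by S is the sum of the rows indexed by a nonempty subset T of S.\<close>

definition rows_indep :: "('a \<Rightarrow> 'a \<Rightarrow> bool) \<Rightarrow> 'a set \<Rightarrow> 'a set \<Rightarrow> bool" where
  "rows_indep A W S \<longleftrightarrow>
     (\<forall>T. T \<subseteq> S \<longrightarrow> T \<noteq> {} \<longrightarrow> (\<exists>w\<in>W. odd (card {u\<in>T. A u w})))"

definition f2_rank :: "('a \<Rightarrow> 'a \<Rightarrow> bool) \<Rightarrow> 'a set \<Rightarrow> nat" where
  "f2_rank A W = Max {card S | S. S \<subseteq> W \<and> rows_indep A W S}"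

definition nullity :: "('a \<Rightarrow> 'a \<Rightarrow> bool) \<Rightarrow> 'a set \<Rightarrow> nat" where
  "nullity A W = card W - f2_rank A W"

datatype 'a rule = Gpr 'a | Gdr 'a 'a | Gnr 'a

type_synonym 'a graph = "'a set \<times> ('a \<Rightarrow> 'a \<Rightarrow> bool)"

fun rule_applies :: "'a graph \<Rightarrow> 'a rule \<Rightarrow> bool" where
  "rule_applies (V, A) (Gpr v) \<longleftrightarrow> v \<in> V \<and> A v v"
| "rule_applies (V, A) (Gdr v1 v2) \<longleftrightarrow>
     v1 \<in> V \<and> v2 \<in> V \<and> v1 \<noteq> v2 \<and> \<not> A v1 v1 \<and> \<not> A v2 v2 \<and> A v1 v2"
| "rule_applies (V, A) (Gnr v) \<longleftrightarrow> v \<in> V \<and> (\<forall>u\<in>V. \<not> A v u)"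

text \<open>Over F2, subtraction is xor (written as \<noteq> on bool).
  gpr: R - Q^T Q; gdr: R - Q^T J Q; gnr: R.\<close>

fun rule_step :: "'a graph \<Rightarrow> 'a rule \<Rightarrow> 'a graph" where
  "rule_step (V, A) (Gpr v) = (V - {v}, \<lambda>x y. A x y \<noteq> (A v x \<and> A v y))"
| "rule_step (V, A) (Gdr v1 v2) =
     (V - {v1, v2}, \<lambda>x y. A x y \<noteq> ((A v1 x \<and> A v2 y) \<noteq> (A v2 x \<and> A v1 y)))"
| "rule_step (V, A) (Gnr v) = (V - {v}, A)"

fun rule_dom :: "'a rule \<Rightarrow> 'a set" where
  "rule_dom (Gpr v) = {v}"
| "rule_dom (Gdr v1 v2) = {v1, v2}"
| "rule_dom (Gnr v) = {v}"

fun is_gnr :: "'a rule \<Rightarrow> bool" where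
  "is_gnr (Gnr v) = True"
| "is_gnr _ = False"

fun strategy_applicable :: "'a graph \<Rightarrow> 'a rule list \<Rightarrow> bool" where
  "strategy_applicable G [] = True"
| "strategy_applicable G (r # rs) \<longleftrightarrow> rule_applies G r \<and> strategy_applicable (rule_step G r) rs"

definition strategy_domain :: "'a rule list \<Rightarrow> 'a set" where
  "strategy_domain rs = (\<Union>r\<in>set rs. rule_dom r)"

definition num_gnr :: "'a rule list \<Rightarrow> nat" where
  "num_gnr rs = length (filter is_gnr rs)"

definition successful :: "'a graph \<Rightarrow> 'a rule list \<Rightarrow> bool" where
  "successful G rs \<longleftrightarrow> strategy_applicable G rs \<and> strategy_domain rs = fst G"

end

theory Submission
  imports Defs
begin

definition par :: "'a set \<Rightarrow> ('a \<Rightarrow> bool) \<Rightarrow> bool" where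
  "par T P = odd (card {u\<in>T. P u})"

lemma par_empty[simp]: "par {} P = False"
  by (simp add: par_def)

lemma par_insert: "finite T \<Longrightarrow> v \<notin> T \<Longrightarrow> par (insert v T) P = (P v \<noteq> par T P)"
proof -
  assume f: "finite T" and v: "v \<notin> T"
  show ?thesis
  proof (cases "P v")
    case True
    then have "{u\<in>insert v T. P u} = insert v {u\<in>T. P u}" by auto
    moreover have "card (insert v {u\<in>T. P u}) = Suc (card {u\<in>T. P u})"
      using f v by (simp add: card_insert_disjoint)
    ultimately show ?thesis using True by (simp add: par_def)
  next
    case False
    then have "{u\<in>insert v T. P u} = {u\<in>T. P u}" by auto
    then show ?thesis using False by (simp add: par_def)
  qed
qed

lemma par_xor: "finite T \<Longrightarrow> par T (\<lambda>u. P u \<noteq> Q u) = (par T P \<noteq> par T Q)"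
  by (induction T rule: finite_induct) (auto simp: par_insert)

lemma par_remove: "finite T \<Longrightarrow> par T P = (par (T - {a}) P \<noteq> (a \<in> T \<and> P a))"
proof (cases "a \<in> T")
  case True
  assume f: "finite T"
  then have "par T P = par (insert a (T - {a})) P" by (metis insert_Diff True)
  also have "\<dots> = (P a \<noteq> par (T - {a}) P)" by (rule par_insert) (use f in auto)
  finally show ?thesis using True by auto
next
  case False
  then show ?thesis by simp
qed

lemma par_cong: "(\<And>u. u \<in> T \<Longrightarrow> P u = Q u) \<Longrightarrow> par T P = par T Q"
proof -
  assume "\<And>u. u \<in> T \<Longrightarrow> P u = Q u"
  then have "{u\<in>T. P u} = {u\<in>T. Q u}" by auto
  then show ?thesis by (simp add: par_def)
qed

lemma par_restrict: "X \<subseteq> U \<Longrightarrow> par X P = par U (\<lambda>u. u \<in> X \<and> P u)"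
proof -
  assume "X \<subseteq> U"
  then have "{u\<in>X. P u} = {u\<in>U. u \<in> X \<and> P u}" by auto
  then show ?thesis by (simp add: par_def)
qed

lemma par_symdiff: "finite X \<Longrightarrow> finite Y \<Longrightarrow>
   par ((X - Y) \<union> (Y - X)) P = (par X P \<noteq> par Y P)"
proof -
  assume fx: "finite X" and fy: "finite Y"
  let ?U = "X \<union> Y"
  have "par ((X - Y) \<union> (Y - X)) P = par ?U (\<lambda>u. u \<in> (X - Y) \<union> (Y - X) \<and> P u)"
    by (rule par_restrict) auto
  also have "\<dots> = par ?U (\<lambda>u. (u \<in> X \<and> P u) \<noteq> (u \<in> Y \<and> P u))"
    by (rule par_cong) auto
  also have "\<dots> = (par ?U (\<lambda>u. u \<in> X \<and> P u) \<noteq> par ?U (\<lambda>u. u \<in> Y \<and> P u))"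
    by (rule par_xor) (use fx fy in simp)
  also have "\<dots> = (par X P \<noteq> par Y P)"
    by (simp add: par_restrict[of X ?U] par_restrict[of Y ?U])
  finally show ?thesis .
qed

lemma rows_indep_par:
  "rows_indep A C S = (\<forall>T. T \<subseteq> S \<longrightarrow> T \<noteq> {} \<longrightarrow> (\<exists>w\<in>C. par T (\<lambda>u. A u w)))"
  by (simp add: rows_indep_def par_def)

definition rank2 :: "('a \<Rightarrow> 'a \<Rightarrow> bool) \<Rightarrow> 'a set \<Rightarrow> 'a set \<Rightarrow> nat" where
  "rank2 A R C = Max {card S | S. S \<subseteq> R \<and> rows_indep A C S}"

lemma f2_rank_eq: "f2_rank A W = rank2 A W W"
  by (simp add: f2_rank_def rank2_def)

lemma rank2_fin: "finite R \<Longrightarrow> finite {card S | S. S \<subseteq> R \<and> rows_indep A C S}"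
proof -
  assume f: "finite R"
  have "{card S | S. S \<subseteq> R \<and> rows_indep A C S} \<subseteq> {..card R}"
    using f by (auto intro: card_mono)
  then show ?thesis by (rule finite_subset) simp
qed

lemma rows_indep_empty: "rows_indep A C {}"
  by (simp add: rows_indep_def)

lemma rank2_ge: "finite R \<Longrightarrow> S \<subseteq> R \<Longrightarrow> rows_indep A C S \<Longrightarrow> card S \<le> rank2 A R C"
  unfolding rank2_def by (rule Max_ge) (auto simp: rank2_fin)

lemma rank2_obtain: "finite R \<Longrightarrow> \<exists>S. S \<subseteq> R \<and> rows_indep A C S \<and> card S = rank2 A R C"
proof -
  assume f: "finite R"
  have "rank2 A R C \<in> {card S | S. S \<subseteq> R \<and> rows_indep A C S}"
    unfolding rank2_def
  proof (rule Max_in)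
    show "finite {card S | S. S \<subseteq> R \<and> rows_indep A C S}" using f by (rule rank2_fin)
    have "card {} \<in> {card S | S. S \<subseteq> R \<and> rows_indep A C S}" using rows_indep_empty[of A C] by (auto intro!: exI[of _ "{}"])
    then show "{card S | S. S \<subseteq> R \<and> rows_indep A C S} \<noteq> {}" by blast
  qed
  then show ?thesis by auto
qed

definition piv :: "('a \<Rightarrow> 'a \<Rightarrow> bool) \<Rightarrow> 'a \<Rightarrow> 'a \<Rightarrow> 'a \<Rightarrow> 'a \<Rightarrow> bool" where
  "piv A a b = (\<lambda>x y. A x y \<noteq> (A x b \<and> A a y))"

lemma par_piv: "finite T \<Longrightarrow>
  par T (\<lambda>u. piv A a b u y) = (par T (\<lambda>u. A u y) \<noteq> (par T (\<lambda>u. A u b) \<and> A a y))"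
proof (cases "A a y")
  case True
  assume fT: "finite T"
  have "par T (\<lambda>u. piv A a b u y) = par T (\<lambda>u. A u y \<noteq> A u b)"
    by (rule par_cong) (simp add: piv_def True)
  also have "\<dots> = (par T (\<lambda>u. A u y) \<noteq> par T (\<lambda>u. A u b))" by (rule par_xor) (rule fT)
  finally show ?thesis using True by simp
next
  case False
  then show ?thesis by (simp add: piv_def)
qed

lemma L_ins:
  assumes f: "finite R" and a: "a \<in> R" and b: "b \<in> C" and ab: "A a b"
    and S': "S' \<subseteq> R - {a}" and ind: "rows_indep (piv A a b) (C - {b}) S'"
  shows "rows_indep A C (insert a S')"
  unfolding rows_indep_par
proof (intro allI impI)
  fix T assume T: "T \<subseteq> insert a S'" and ne: "T \<noteq> {}"
  show "\<exists>w\<in>C. par T (\<lambda>u. A u w)"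
  proof (rule ccontr)
    assume "\<not> ?thesis"
    then have H: "\<And>w. w \<in> C \<Longrightarrow> \<not> par T (\<lambda>u. A u w)" by auto
    have fT: "finite T" using T S' a f by (meson finite_insert finite_subset Diff_subset subset_trans)
    define T0 where "T0 = T - {a}"
    have fT0: "finite T0" using fT T0_def by simp
    have rem: "\<And>y. par T (\<lambda>u. A u y) = (par T0 (\<lambda>u. A u y) \<noteq> (a \<in> T \<and> A a y))"
      unfolding T0_def using fT by (rule par_remove)
    show False
    proof (cases "T0 = {}")
      case True
      then have "T = {a}" using ne T0_def by auto
      then show False using H[OF b] ab by (simp add: par_insert)
    next
      case False
      have Hb: "par T0 (\<lambda>u. A u b) = (a \<in> T)" using H[OF b] rem[of b] ab by auto
      have "T0 \<subseteq> S'" using T T0_def by auto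
      then obtain w where w: "w \<in> C - {b}" and p: "par T0 (\<lambda>u. piv A a b u w)"
        using ind False unfolding rows_indep_par by blast
      have "par T0 (\<lambda>u. piv A a b u w) = par T (\<lambda>u. A u w)"
        using par_piv[OF fT0, of A a b w] Hb rem[of w] by auto
      then show False using p H w by auto
    qed
  qed
qed

lemma L1:
  assumes f: "finite R" and SR: "S \<subseteq> R" and a: "a \<in> S" and b: "b \<in> C" and ab: "A a b"
    and ind: "rows_indep A C S"
  shows "rows_indep (piv A a b) (C - {b}) (S - {a})"
  unfolding rows_indep_par
proof (intro allI impI)
  fix T assume T: "T \<subseteq> S - {a}" and ne: "T \<noteq> {}"
  have fT: "finite T" using T SR f by (meson Diff_subset finite_subset subset_trans)
  have aT: "a \<notin> T" using T by auto
  show "\<exists>w\<in>C - {b}. par T (\<lambda>u. piv A a b u w)"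
  proof (rule ccontr)
    assume "\<not> ?thesis"
    then have H: "\<And>w. w \<in> C - {b} \<Longrightarrow> \<not> par T (\<lambda>u. piv A a b u w)" by auto
    define c where "c = par T (\<lambda>u. A u b)"
    define T' where "T' = (if c then insert a T else T)"
    have T'S: "T' \<subseteq> S" using T a T'_def by auto
    have T'ne: "T' \<noteq> {}" using ne T'_def by auto
    have pT': "\<And>w. par T' (\<lambda>u. A u w) = (par T (\<lambda>u. A u w) \<noteq> (c \<and> A a w))"
      using fT aT by (cases c) (auto simp: T'_def par_insert)
    have "\<forall>w\<in>C. \<not> par T' (\<lambda>u. A u w)"
    proof
      fix w assume w: "w \<in> C"
      show "\<not> par T' (\<lambda>u. A u w)"
      proof (cases "w = b")
        case True then show ?thesis using pT'[of b] ab c_def by auto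
      next
        case False
        then have "\<not> par T (\<lambda>u. piv A a b u w)" using H w by auto
        then show ?thesis using pT'[of w] par_piv[OF fT, of A a b w] c_def by auto
      qed
    qed
    then show False using ind T'S T'ne unfolding rows_indep_par by blast
  qed
qed

lemma L2:
  assumes f: "finite R" and SR: "S \<subseteq> R" and a: "a \<in> R" and b: "b \<in> C" and ab: "A a b"
    and ind: "rows_indep A C S"
  shows "\<exists>S2. S2 \<subseteq> R \<and> a \<in> S2 \<and> card S \<le> card S2 \<and> rows_indep A C S2"
proof (cases "rows_indep A C (insert a S)")
  case True
  have "finite S" using SR f finite_subset by blast
  then have "card S \<le> card (insert a S)" by (simp add: card_insert_le)
  moreover have "insert a S \<subseteq> R" using SR a by simp
  ultimately show ?thesis using True by (intro exI[of _ "insert a S"]) simp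
next
  case False
  have fS: "finite S" using SR f finite_subset by blast
  have aS: "a \<notin> S"
  proof
    assume "a \<in> S"
    then have "insert a S = S" by auto
    with False ind show False by simp
  qed
  obtain T where T: "T \<subseteq> insert a S" and ne: "T \<noteq> {}" and H: "\<forall>w\<in>C. \<not> par T (\<lambda>u. A u w)"
    using False unfolding rows_indep_par by blast
  have fT: "finite T" using T fS by (meson finite_insert finite_subset)
  have aT: "a \<in> T"
  proof (rule ccontr)
    assume "a \<notin> T"
    then have "T \<subseteq> S" using T by auto
    then show False using ind ne H unfolding rows_indep_par by blast
  qed
  define T1 where "T1 = T - {a}"
  have T1S: "T1 \<subseteq> S" using T T1_def by auto
  have fT1: "finite T1" using fT T1_def by simp
  have H1: "par T1 (\<lambda>u. A u w) = A a w" if w: "w \<in> C" for w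
  proof -
    have "par T (\<lambda>u. A u w) = (par T1 (\<lambda>u. A u w) \<noteq> (a \<in> T \<and> A a w))"
      unfolding T1_def by (rule par_remove[OF fT])
    then show ?thesis using H w aT by auto
  qed
  have "T1 \<noteq> {}" using H1[OF b] ab by auto
  then obtain u where u: "u \<in> T1" by auto
  define S2 where "S2 = insert a (S - {u})"
  have uS: "u \<in> S" using u T1S by auto
  have cpos: "card S > 0" using fS uS card_gt_0_iff by blast
  have cardS2: "card S2 = card S"
    using fS aS uS cpos by (simp add: S2_def card_insert_disjoint)
  have "rows_indep A C S2"
    unfolding rows_indep_par
  proof (intro allI impI)
    fix T' assume T': "T' \<subseteq> S2" and ne': "T' \<noteq> {}"
    have "finite S2" using fS S2_def by simp
    then have fT': "finite T'" using T' by (rule finite_subset[rotated])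
    show "\<exists>w\<in>C. par T' (\<lambda>u. A u w)"
    proof (rule ccontr)
      assume "\<not> ?thesis"
      then have H2: "\<And>w. w \<in> C \<Longrightarrow> \<not> par T' (\<lambda>u. A u w)" by auto
      show False
      proof (cases "a \<in> T'")
        case False
        then have "T' \<subseteq> S" using T' S2_def by auto
        then show False using ind ne' H2 unfolding rows_indep_par by blast
      next
        case True
        define T0 where "T0 = T' - {a}"
        have T0S: "T0 \<subseteq> S - {u}" using T' T0_def S2_def by auto
        have fT0: "finite T0" using fT' T0_def by simp
        have H0: "par T0 (\<lambda>u. A u w) = A a w" if w: "w \<in> C" for w
        proof -
          have "par T' (\<lambda>u. A u w) = (par T0 (\<lambda>u. A u w) \<noteq> (a \<in> T' \<and> A a w))"
            unfolding T0_def by (rule par_remove[OF fT'])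
          then show ?thesis using H2[OF w] True by auto
        qed
        define D where "D = (T0 - T1) \<union> (T1 - T0)"
        have DS: "D \<subseteq> S" using T0S T1S D_def by auto
        have Dne: "D \<noteq> {}" using u T0S D_def by auto
        have "\<forall>w\<in>C. \<not> par D (\<lambda>u. A u w)"
        proof
          fix w assume w: "w \<in> C"
          have "par D (\<lambda>u. A u w) = (par T0 (\<lambda>u. A u w) \<noteq> par T1 (\<lambda>u. A u w))"
            unfolding D_def by (rule par_symdiff[OF fT0 fT1])
          then show "\<not> par D (\<lambda>u. A u w)" using H0[OF w] H1[OF w] by simp
        qed
        then show False using ind DS Dne unfolding rows_indep_par by blast
      qed
    qed
  qed
  moreover have "S2 \<subseteq> R" using SR a S2_def by auto
  ultimately show ?thesis using cardS2 S2_def by (intro exI[of _ S2]) simp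
qed

lemma rank2_piv:
  assumes f: "finite R" and a: "a \<in> R" and b: "b \<in> C" and ab: "A a b"
  shows "rank2 A R C = Suc (rank2 (piv A a b) (R - {a}) (C - {b}))"
proof -
  have fR': "finite (R - {a})" using f by simp
  obtain S' where S': "S' \<subseteq> R - {a}" "rows_indep (piv A a b) (C - {b}) S'"
    "card S' = rank2 (piv A a b) (R - {a}) (C - {b})"
    using rank2_obtain[OF fR'] by blast
  have "rows_indep A C (insert a S')" using L_ins[OF f a b ab S'(1,2)] .
  moreover have "insert a S' \<subseteq> R" using S' a by auto
  moreover have "card (insert a S') = Suc (card S')"
    using S' fR' by (metis Diff_iff card_insert_disjoint finite_subset insertI1 subsetD)
  ultimately have ge: "Suc (rank2 (piv A a b) (R - {a}) (C - {b})) \<le> rank2 A R C"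
    using rank2_ge[OF f] S'(3) by metis
  obtain S where S: "S \<subseteq> R" "rows_indep A C S" "card S = rank2 A R C"
    using rank2_obtain[OF f] by blast
  obtain S2 where S2: "S2 \<subseteq> R" "a \<in> S2" "card S \<le> card S2" "rows_indep A C S2"
    using L2[OF f S(1) a b ab S(2)] by blast
  have i2: "rows_indep (piv A a b) (C - {b}) (S2 - {a})" using L1[OF f S2(1) S2(2) b ab S2(4)] .
  have sub: "S2 - {a} \<subseteq> R - {a}" using S2(1) by auto
  have c1: "card (S2 - {a}) \<le> rank2 (piv A a b) (R - {a}) (C - {b})"
    by (rule rank2_ge[OF fR' sub i2])
  have c2: "card (S2 - {a}) = card S2 - 1" using S2(2) by simp
  have fS2: "finite S2" using S2(1) f by (rule finite_subset)
  have c3: "card S2 \<ge> 1" using S2(2) fS2 by (metis One_nat_def Suc_leI card_gt_0_iff empty_iff)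
  show ?thesis using ge S2(3) S(3) c1 c2 c3 by linarith
qed

lemma rank2_zero_row:
  assumes v: "\<forall>w\<in>C. \<not> A v w"
  shows "rank2 A R C = rank2 A (R - {v}) C"
proof -
  have "\<And>S. rows_indep A C S \<Longrightarrow> v \<notin> S"
  proof
    fix S assume i: "rows_indep A C S" and vS: "v \<in> S"
    have "{v} \<subseteq> S" using vS by auto
    then obtain w where "w \<in> C" "par {v} (\<lambda>u. A u w)" using i unfolding rows_indep_par by blast
    then show False using v by (simp add: par_insert)
  qed
  then have "{S. S \<subseteq> R \<and> rows_indep A C S} = {S. S \<subseteq> R - {v} \<and> rows_indep A C S}" by blast
  then have "{card S | S. S \<subseteq> R \<and> rows_indep A C S} = {card S | S. S \<subseteq> R - {v} \<and> rows_indep A C S}"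
    by blast
  then show ?thesis unfolding rank2_def by simp
qed

lemma rank2_zero_col:
  assumes b: "\<forall>u\<in>R. \<not> A u b"
  shows "rank2 A R C = rank2 A R (C - {b})"
proof -
  have "\<And>S. S \<subseteq> R \<Longrightarrow> rows_indep A C S = rows_indep A (C - {b}) S"
  proof -
    fix S assume SR: "S \<subseteq> R"
    have z: "\<And>T. T \<subseteq> S \<Longrightarrow> \<not> par T (\<lambda>u. A u b)"
    proof -
      fix T assume "T \<subseteq> S"
      then have "{u\<in>T. A u b} = {}" using SR b by auto
      then have "card {u\<in>T. A u b} = 0" by (simp only: card.empty)
      then show "\<not> par T (\<lambda>u. A u b)" by (simp add: par_def)
    qed
    have "\<And>T. T \<subseteq> S \<Longrightarrow> (\<exists>w\<in>C. par T (\<lambda>u. A u w)) = (\<exists>w\<in>C - {b}. par T (\<lambda>u. A u w))"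
    proof -
      fix T assume TS: "T \<subseteq> S"
      show "(\<exists>w\<in>C. par T (\<lambda>u. A u w)) = (\<exists>w\<in>C - {b}. par T (\<lambda>u. A u w))"
      proof
        assume "\<exists>w\<in>C. par T (\<lambda>u. A u w)"
        then obtain w where "w \<in> C" "par T (\<lambda>u. A u w)" by blast
        moreover have "w \<noteq> b" using z[OF TS] calculation(2) by auto
        ultimately show "\<exists>w\<in>C - {b}. par T (\<lambda>u. A u w)" by blast
      qed auto
    qed
    then show "rows_indep A C S = rows_indep A (C - {b}) S"
      unfolding rows_indep_par by blast
  qed
  then have "{card S | S. S \<subseteq> R \<and> rows_indep A C S} = {card S | S. S \<subseteq> R \<and> rows_indep A (C - {b}) S}"
    by blast
  then show ?thesis unfolding rank2_def by simp
qed


lemma step_fst: "fst (rule_step (V, A) r) = V - rule_dom r"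
  by (cases r) auto

lemma step_sym: "\<forall>u v. A u v = A v u \<Longrightarrow> \<forall>u v. snd (rule_step (V, A) r) u v = snd (rule_step (V, A) r) v u"
  by (cases r) auto

lemma applies_dom: "rule_applies (V, A) r \<Longrightarrow> rule_dom r \<subseteq> V"
  by (cases r) auto

lemma dom_sub: "strategy_applicable (V, A) rs \<Longrightarrow> strategy_domain rs \<subseteq> V"
proof (induction rs arbitrary: V A)
  case Nil
  then show ?case by (simp add: strategy_domain_def)
next
  case (Cons r rs)
  obtain V' A' where st: "rule_step (V, A) r = (V', A')" by (cases "rule_step (V, A) r")
  have V': "V' = V - rule_dom r" using step_fst[of V A r] st by simp
  have "strategy_applicable (V', A') rs" using Cons.prems st by simp
  then have "strategy_domain rs \<subseteq> V'" by (rule Cons.IH)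
  moreover have "rule_dom r \<subseteq> V" using Cons.prems applies_dom by auto
  ultimately show ?case using V' by (auto simp: strategy_domain_def)
qed

lemma fin_dom: "finite (strategy_domain rs)"
proof -
  have h: "\<And>r. finite (rule_dom r)" by (case_tac r) auto
  show ?thesis unfolding strategy_domain_def by (rule finite_UN_I) (simp_all add: h)
qed

lemma rule_rank:
  assumes sym: "\<forall>u v. A u v = A v u" and WV: "W \<subseteq> V" and fW: "finite W"
    and ap: "rule_applies (V, A) r" and dW: "rule_dom r \<subseteq> W"
  shows "f2_rank A W = f2_rank (snd (rule_step (V, A) r)) (W - rule_dom r)
           + (if is_gnr r then 0 else card (rule_dom r))"
proof (cases r)
  case (Gpr v)
  have v: "v \<in> W" "A v v" using ap dW Gpr by auto
  have e: "piv A v v = (\<lambda>x y. A x y \<noteq> (A v x \<and> A v y))"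
    unfolding piv_def using sym by (intro ext) metis
  have "f2_rank A W = Suc (rank2 (piv A v v) (W - {v}) (W - {v}))"
    unfolding f2_rank_eq by (rule rank2_piv[of W v v W A, OF fW v(1) v(1) v(2)])
  then show ?thesis using Gpr e by (simp add: f2_rank_eq)
next
  case (Gdr v1 v2)
  have v: "v1 \<in> W" "v2 \<in> W" "v1 \<noteq> v2" "\<not> A v1 v1" "\<not> A v2 v2" "A v1 v2"
    using ap dW Gdr by auto
  define A1 where "A1 = piv A v1 v2"
  have r1: "rank2 A W W = Suc (rank2 A1 (W - {v1}) (W - {v2}))"
    unfolding A1_def by (rule rank2_piv[of W v1 v2 W A, OF fW v(1) v(2) v(6)])
  have a1: "A1 v2 v1" using v sym unfolding A1_def piv_def by auto
  have r2: "rank2 A1 (W - {v1}) (W - {v2}) = Suc (rank2 (piv A1 v2 v1) (W - {v1} - {v2}) (W - {v2} - {v1}))"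
    by (rule rank2_piv) (use fW v a1 in auto)
  have e: "piv A1 v2 v1 = (\<lambda>x y. A x y \<noteq> ((A v1 x \<and> A v2 y) \<noteq> (A v2 x \<and> A v1 y)))"
  proof (intro ext)
    fix x y
    have s1: "A v1 x = A x v1" "A v2 x = A x v2" using sym by auto
    show "piv A1 v2 v1 x y = (A x y \<noteq> ((A v1 x \<and> A v2 y) \<noteq> (A v2 x \<and> A v1 y)))"
      unfolding A1_def piv_def s1 using v(4,5) by auto
  qed
  have d: "W - {v1} - {v2} = W - {v1, v2}" "W - {v2} - {v1} = W - {v1, v2}" by auto
  have "card {v1, v2} = 2" using v(3) by simp
  then show ?thesis using Gdr r1 r2 e d by (simp add: f2_rank_eq)
next
  case (Gnr v)
  have v: "v \<in> W" "\<forall>u\<in>V. \<not> A v u" using ap dW Gnr by auto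
  have z1: "\<forall>w\<in>W. \<not> A v w" using v WV by auto
  have z2: "\<forall>u\<in>W - {v}. \<not> A u v" using z1 sym by auto
  have "rank2 A W W = rank2 A (W - {v}) W" by (rule rank2_zero_row) (rule z1)
  also have "\<dots> = rank2 A (W - {v}) (W - {v})" by (rule rank2_zero_col) (rule z2)
  finally show ?thesis using Gnr by (simp add: f2_rank_eq)
qed

lemma main_count:
  "\<forall>u v. A u v = A v u \<Longrightarrow> strategy_applicable (V, A) rs \<Longrightarrow>
    card (strategy_domain rs) = num_gnr rs + f2_rank A (strategy_domain rs)"
proof (induction rs arbitrary: V A)
  case Nil
  have "f2_rank A {} = 0" unfolding f2_rank_eq rank2_def
    by (simp add: rows_indep_empty)
  then show ?case by (simp add: strategy_domain_def num_gnr_def)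
next
  case (Cons r rs)
  obtain V' A' where st: "rule_step (V, A) r = (V', A')" by (cases "rule_step (V, A) r")
  have V': "V' = V - rule_dom r" using step_fst[of V A r] st by simp
  have sym': "\<forall>u v. A' u v = A' v u" using step_sym[OF Cons.prems(1), of V r] st by simp
  have ap: "rule_applies (V, A) r" using Cons.prems by simp
  have apl: "strategy_applicable (V', A') rs" using Cons.prems st by simp
  have IH: "card (strategy_domain rs) = num_gnr rs + f2_rank A' (strategy_domain rs)"
    by (rule Cons.IH[OF sym' apl])
  define W where "W = strategy_domain (r # rs)"
  have Wd: "W = rule_dom r \<union> strategy_domain rs" by (simp add: W_def strategy_domain_def)
  have DV': "strategy_domain rs \<subseteq> V'" using dom_sub[OF apl] .
  have D': "strategy_domain rs = W - rule_dom r" using Wd DV' V' by auto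
  have WV: "W \<subseteq> V" using dom_sub[OF Cons.prems(2)] W_def by simp
  have fW: "finite W" using fin_dom W_def by simp
  have dW: "rule_dom r \<subseteq> W" using Wd by auto
  have rr: "f2_rank A W = f2_rank A' (W - rule_dom r) + (if is_gnr r then 0 else card (rule_dom r))"
    using rule_rank[OF Cons.prems(1) WV fW ap dW] st by simp
  have cW: "card W = card (W - rule_dom r) + card (rule_dom r)"
    using fW dW by (metis card_Diff_subset card_mono diff_add_inverse2 finite_subset le_add_diff_inverse2)
  have ng: "num_gnr (r # rs) = (if is_gnr r then 1 else 0) + num_gnr rs" by (simp add: num_gnr_def)
  have g1: "is_gnr r \<Longrightarrow> card (rule_dom r) = 1" by (cases r) auto
  show ?case using IH rr cW ng g1 D' unfolding W_def[symmetric] by (cases "is_gnr r") auto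
qed

theorem mainTheorem12:
  fixes V W :: "'a set" and A :: "'a \<Rightarrow> 'a \<Rightarrow> bool"
  assumes "is_graph V A" and "W \<subseteq> V" and "reducible V A W"
  shows "(\<forall>rs. strategy_applicable (V, A) rs \<and> strategy_domain rs = W
            \<longrightarrow> num_gnr rs = nullity A W)
         \<and> (\<forall>rs. successful (V, A) rs \<longrightarrow> num_gnr rs = card V - f2_rank A V)"
proof -
  have sym: "\<forall>u v. A u v = A v u" using assms(1) by (simp add: is_graph_def)
  show ?thesis
  proof (intro conjI allI impI)
    fix rs assume h: "strategy_applicable (V, A) rs \<and> strategy_domain rs = W"
    then show "num_gnr rs = nullity A W"
      using main_count[OF sym, of V rs] by (simp add: nullity_def)
  next
    fix rs assume h: "successful (V, A) rs"
    then show "num_gnr rs = card V - f2_rank A V"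
      using main_count[OF sym, of V rs] by (simp add: successful_def)
  qed
qed

end
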